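(* In the security 1st model, for every attacker AS $m$, destination AS $d$, and AS $s$ that, in normal conditions, has a secure route to $d$ that does not go through $m$, $s$ will use a secure route to $d$ even during $m$'s attack.
   Context: The AS-level topology is an undirected graph $G=(V,E)$ whose edges are annotated as customer-to-provider or peer-to-peer. For each destination AS $d$, every other AS selects one route among those announced to it by neighbors. An insecure AS ranks routes by: (LP, local preference) customer routes over peer routes over provider routes; (SP) shorter AS paths over longer ones; (TB) intradomain tiebreak. Export policy (Ex): a route via a customer is exported to all neighbors, otherwise only to customers. A set $S$ of ASes is secure (has deployed S*BGP); a route is secure if every AS on it is secure (it is learned via S*BGP), otherwise it is insecure. Each secure AS adds a step (SecP): prefer a secure route over an insecure route. In the security 1st model, SecP is placed before the LP step (all ASes use this same ordering). Attack: a single attacker AS $m$ (not actually adjacent to $d$) announces the bogus AS path "$m,d$" via legacy (insecure) BGP to all its neighbors; all ASes other than $m$ follow the policies above. "Normal conditions" means there is no attack. A protocol downgrade attack is when a source AS that uses a secure route to the legitimate destination under normal conditions switches to an insecure bogus route during the attack. *)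

theory Defs
  imports Main "HOL-Library.Product_Lexorder"
begin

text \<open>AS topology. cust x y: x is a customer of y (y is a provider of x).
  peer x y: x and y are peers. Routes are lists of ASes from the current AS
  to the destination (e.g. [v, u, ..., d]).\<close>

definition adj :: "('a \<Rightarrow> 'a \<Rightarrow> bool) \<Rightarrow> ('a \<Rightarrow> 'a \<Rightarrow> bool) \<Rightarrow> 'a \<Rightarrow> 'a \<Rightarrow> bool" where
  "adj cust peer x y \<longleftrightarrow> cust x y \<or> cust y x \<or> peer x y"

definition as_topology :: "('a \<Rightarrow> 'a \<Rightarrow> bool) \<Rightarrow> ('a \<Rightarrow> 'a \<Rightarrow> bool) \<Rightarrow> bool" where
  "as_topology cust peer \<longleftrightarrow>
     (\<forall>x y. peer x y \<longrightarrow> peer y x) \<and>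
     (\<forall>x. \<not> peer x x) \<and>
     (\<forall>x y. cust x y \<longrightarrow> \<not> peer x y) \<and>
     (\<forall>x. \<not> (cust\<^sup>+\<^sup>+) x x)"

definition tiebreak_wf :: "('a \<Rightarrow> 'a \<Rightarrow> bool) \<Rightarrow> ('a \<Rightarrow> 'a \<Rightarrow> bool) \<Rightarrow> ('a \<Rightarrow> 'a \<Rightarrow> nat) \<Rightarrow> bool" where
  "tiebreak_wf cust peer tb \<longleftrightarrow> (\<forall>v. inj_on (tb v) {u. adj cust peer v u})"

text \<open>A route is secure if every AS on it is secure; during an attack by m, a route containing
  m derives from m's legacy (insecure) bogus announcement and is insecure.
  att = None means normal conditions, att = Some m means m attacks.\<close>
definition secure_route :: "'a set \<Rightarrow> 'a option \<Rightarrow> 'a list \<Rightarrow> bool" where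
  "secure_route S att p \<longleftrightarrow> set p \<subseteq> S \<and> (\<forall>m. att = Some m \<longrightarrow> m \<notin> set p)"

definition exports :: "('a \<Rightarrow> 'a \<Rightarrow> bool) \<Rightarrow> 'a \<Rightarrow> 'a option \<Rightarrow> 'a \<Rightarrow> 'a list \<Rightarrow> 'a \<Rightarrow> bool" where
  "exports cust d att u p v \<longleftrightarrow>
     u = d \<or> att = Some u \<or> (\<exists>w rest. p = u # w # rest \<and> cust w u) \<or> cust v u"

definition offers :: "('a \<Rightarrow> 'a \<Rightarrow> bool) \<Rightarrow> ('a \<Rightarrow> 'a \<Rightarrow> bool) \<Rightarrow> 'a \<Rightarrow> 'a option
    \<Rightarrow> ('a \<Rightarrow> 'a list option) \<Rightarrow> 'a \<Rightarrow> 'a list set" where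
  "offers cust peer d att r v =
     {v # p | u p. adj cust peer v u \<and> r u = Some p \<and> v \<notin> set p \<and> exports cust d att u p v}"

definition lp_class :: "('a \<Rightarrow> 'a \<Rightarrow> bool) \<Rightarrow> ('a \<Rightarrow> 'a \<Rightarrow> bool) \<Rightarrow> 'a \<Rightarrow> 'a list \<Rightarrow> nat" where
  "lp_class cust peer v p = (if cust (p ! 1) v then 0 else if peer v (p ! 1) then 1 else 2)"

definition sec_class :: "'a set \<Rightarrow> 'a option \<Rightarrow> 'a \<Rightarrow> 'a list \<Rightarrow> nat" where
  "sec_class S att v p = (if v \<in> S \<and> \<not> secure_route S att p then 1 else 0)"

text \<open>Security 1st ranking: SecP, then LP, then SP, then TB (lexicographic, smaller is better).\<close>
definition rank1 :: "('a \<Rightarrow> 'a \<Rightarrow> bool) \<Rightarrow> ('a \<Rightarrow> 'a \<Rightarrow> bool) \<Rightarrow> 'a set \<Rightarrow> ('a \<Rightarrow> 'a \<Rightarrow> nat)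
    \<Rightarrow> 'a option \<Rightarrow> 'a \<Rightarrow> 'a list \<Rightarrow> nat \<times> nat \<times> nat \<times> nat" where
  "rank1 cust peer S tb att v p =
     (sec_class S att v p, lp_class cust peer v p, length p, tb v (p ! 1))"

definition stable1 :: "('a \<Rightarrow> 'a \<Rightarrow> bool) \<Rightarrow> ('a \<Rightarrow> 'a \<Rightarrow> bool) \<Rightarrow> 'a set \<Rightarrow> ('a \<Rightarrow> 'a \<Rightarrow> nat)
    \<Rightarrow> 'a \<Rightarrow> 'a option \<Rightarrow> ('a \<Rightarrow> 'a list option) \<Rightarrow> bool" where
  "stable1 cust peer S tb d att r \<longleftrightarrow>
     r d = Some [d] \<and>
     (\<forall>m. att = Some m \<longrightarrow> r m = Some [m, d]) \<and>
     (\<forall>v. v \<noteq> d \<and> att \<noteq> Some v \<longrightarrow>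
        (offers cust peer d att r v = {} \<longrightarrow> r v = None) \<and>
        (offers cust peer d att r v \<noteq> {} \<longrightarrow>
           (\<exists>p. r v = Some p \<and> p \<in> offers cust peer d att r v \<and>
                (\<forall>q \<in> offers cust peer d att r v.
                    rank1 cust peer S tb att v p \<le> rank1 cust peer S tb att v q))))"

end

theory Submission
  imports Defs
begin

lemma choice:
  assumes "stable1 cust peer S tb d att r" "v \<noteq> d" "att \<noteq> Some v" "r v = Some q"
  shows "q \<in> offers cust peer d att r v \<and>
         (\<forall>oo \<in> offers cust peer d att r v. rank1 cust peer S tb att v q \<le> rank1 cust peer S tb att v oo)"
proof -
  have H: "(offers cust peer d att r v = {} \<longrightarrow> r v = None) \<and>
        (offers cust peer d att r v \<noteq> {} \<longrightarrow>
           (\<exists>p. r v = Some p \<and> p \<in> offers cust peer d att r v \<and>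
                (\<forall>q \<in> offers cust peer d att r v.
                    rank1 cust peer S tb att v p \<le> rank1 cust peer S tb att v q)))"
    using assms(1-3) unfolding stable1_def by blast
  have "offers cust peer d att r v \<noteq> {}" using H assms(4) by auto
  then show ?thesis using H assms(4) by auto
qed

lemma L0a:
  assumes "stable1 cust peer S tb d att r" "r u = Some q"
  shows "\<exists>q'. q = u # q'"
proof (cases "u = d")
  case True then show ?thesis using assms unfolding stable1_def by auto
next
  case False
  show ?thesis
  proof (cases "att = Some u")
    case True then show ?thesis using assms unfolding stable1_def by auto
  next
    case F: False
    from choice[OF assms(1) False F assms(2)] show ?thesis
      unfolding offers_def by auto
  qed
qed

lemma L0b:
  assumes "stable1 cust peer S tb d att r" "r u = Some q" "u \<noteq> d"
  shows "\<exists>x rest. q = u # x # rest"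
proof (cases "att = Some u")
  case True then show ?thesis using assms unfolding stable1_def by auto
next
  case F: False
  from choice[OF assms(1) assms(3) F assms(2)] obtain x p' where
    "q = u # p'" "r x = Some p'" unfolding offers_def by auto
  with L0a[OF assms(1) this(2)] show ?thesis by auto
qed

lemma L1:
  assumes st: "stable1 cust peer S tb d att r"
  shows "r u = Some q \<Longrightarrow> k < length q \<Longrightarrow> r (q ! k) = Some (drop k q)"
proof (induction k arbitrary: u q)
  case 0
  then obtain q' where "q = u # q'" using L0a[OF st] by blast
  then show ?case using 0 by simp
next
  case (Suc k)
  show ?case
  proof (cases "u = d")
    case True then show ?thesis using Suc st unfolding stable1_def by auto
  next
    case False
    show ?thesis
    proof (cases "att = Some u")
      case True then show ?thesis using Suc st unfolding stable1_def by auto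
    next
      case F: False
      from choice[OF st False F Suc.prems(1)] obtain x p' where
        "q = u # p'" "r x = Some p'" unfolding offers_def by auto
      with Suc.IH[OF this(2)] Suc.prems show ?thesis by auto
    qed
  qed
qed

lemma L2:
  assumes st: "stable1 cust peer S tb d att r" and top: "as_topology cust peer"
    and nadj: "\<forall>m. att = Some m \<longrightarrow> \<not> adj cust peer m d"
  shows "r u = Some q \<Longrightarrow> Suc 0 < length q \<Longrightarrow> cust (q ! 1) u \<Longrightarrow>
         (\<forall>m. att = Some m \<longrightarrow> m \<notin> set q) \<Longrightarrow>
         \<forall>j. 0 < j \<and> j < length q \<longrightarrow> cust\<^sup>+\<^sup>+ (q ! j) u"
proof (induction q arbitrary: u)
  case Nil then show ?case by simp
next
  case (Cons a q')
  have au: "a = u" using L0a[OF st Cons.prems(1)] by auto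
  have ud: "u \<noteq> d"
  proof
    assume "u = d"
    then have "a # q' = [d]" using Cons.prems(1) st unfolding stable1_def by auto
    then show False using Cons.prems(2) by simp
  qed
  have ua: "att \<noteq> Some u" using Cons.prems(4) au by auto
  from choice[OF st ud ua Cons.prems(1)] obtain w where
    w: "r w = Some q'" "adj cust peer u w" "u \<notin> set q'" "exports cust d att w q' u"
    unfolding offers_def by auto
  obtain q'' where q'': "q' = w # q''" using L0a[OF st w(1)] by auto
  have cwu: "cust w u" using Cons.prems(3) q'' by simp
  have acyc: "\<forall>x. \<not> cust\<^sup>+\<^sup>+ x x" using top unfolding as_topology_def by auto
  consider "w = d" | "att = Some w" | "\<exists>w2 rest. q' = w # w2 # rest \<and> cust w2 w" | "cust u w"
    using w(4) unfolding exports_def by blast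
  then show ?case
  proof cases
    case 1
    then have "q' = [d]" using w(1) st unfolding stable1_def by auto
    then show ?thesis using cwu 1 by (auto simp: less_Suc_eq)
  next
    case 2 then show ?thesis using Cons.prems(4) q'' by auto
  next
    case 3
    then obtain w2 rest where wr: "q' = w # w2 # rest" "cust w2 w" by blast
    have IH: "\<forall>j. 0 < j \<and> j < length q' \<longrightarrow> cust\<^sup>+\<^sup>+ (q' ! j) w"
      using Cons.IH[OF w(1)] wr Cons.prems(4) by auto
    show ?thesis
    proof (intro allI impI)
      fix j assume j: "0 < j \<and> j < length (a # q')"
      then obtain i where i: "j = Suc i" by (cases j) auto
      show "cust\<^sup>+\<^sup>+ ((a # q') ! j) u"
      proof (cases i)
        case 0 then show ?thesis using i cwu q'' by auto
      next
        case (Suc i')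
        then have "cust\<^sup>+\<^sup>+ (q' ! i) w" using IH j i by auto
        then show ?thesis using i cwu by (simp add: tranclp.trancl_into_trancl)
      qed
    qed
  next
    case 4
    then have "cust\<^sup>+\<^sup>+ u u" using cwu by (meson tranclp.r_into_trancl tranclp.trancl_into_trancl)
    then show ?thesis using acyc by blast
  qed
qed

lemma main:
  fixes cust peer :: "'a \<Rightarrow> 'a \<Rightarrow> bool"
  assumes top: "as_topology cust peer"
    and md: "m \<noteq> d" and nadj: "\<not> adj cust peer m d"
    and stN: "stable1 cust peer S tb d None rN"
    and stA: "stable1 cust peer S tb d (Some m) rA"
  shows "rN v = Some q0 \<Longrightarrow> secure_route S None q0 \<Longrightarrow> m \<notin> set q0 \<Longrightarrow>
    \<exists>q. rA v = Some q \<and> secure_route S (Some m) q \<and>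
      (Suc 0 < length q0 \<and> cust (q0 ! 1) v \<longrightarrow> Suc 0 < length q \<and> cust (q ! 1) v)"
proof (induction q0 arbitrary: v)
  case Nil then show ?case using L0a[OF stN] by blast
next
  case (Cons a q0')
  have av: "a = v" using L0a[OF stN Cons.prems(1)] by auto
  have acyc: "\<forall>x. \<not> cust\<^sup>+\<^sup>+ x x" using top unfolding as_topology_def by auto
  show ?case
  proof (cases "v = d")
    case True
    then have "a # q0' = [d]" using Cons.prems(1) stN unfolding stable1_def by auto
    moreover have "rA d = Some [d]" using stA unfolding stable1_def by auto
    ultimately show ?thesis using True Cons.prems(2) md unfolding secure_route_def by auto
  next
    case vd: False
    have vm: "v \<noteq> m" using Cons.prems(3) av by auto
    have vS: "v \<in> S" using Cons.prems(2) av unfolding secure_route_def by auto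
    from choice[OF stN vd _ Cons.prems(1)] obtain w where
      w: "rN w = Some q0'" "adj cust peer v w" "v \<notin> set q0'" "exports cust d None w q0' v"
      unfolding offers_def by auto
    obtain q0'' where q0'': "q0' = w # q0''" using L0a[OF stN w(1)] by auto
    have sec': "secure_route S None q0'" "m \<notin> set q0'"
      using Cons.prems(2,3) unfolding secure_route_def by auto
    obtain qA where qA: "rA w = Some qA" "secure_route S (Some m) qA"
      "Suc 0 < length q0' \<and> cust (q0' ! 1) w \<longrightarrow> Suc 0 < length qA \<and> cust (qA ! 1) w"
      using Cons.IH[OF w(1) sec'] by blast
    obtain qA' where qA': "qA = w # qA'" using L0a[OF stA qA(1)] by auto
    have mqA: "m \<notin> set qA" using qA(2) unfolding secure_route_def by auto
    have rAd: "rA d = Some [d]" using stA unfolding stable1_def by auto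
    have exN: "w = d \<or> (\<exists>w2 rest. q0' = w # w2 # rest \<and> cust w2 w) \<or> cust v w"
      using w(4) unfolding exports_def by auto
    show ?thesis
    proof (cases "v \<in> set qA")
      case True
      then obtain k where k: "k < length qA" "qA ! k = v" by (meson in_set_conv_nth)
      have rv: "rA v = Some (drop k qA)" using L1[OF stA qA(1) k(1)] k(2) by simp
      have sd: "secure_route S (Some m) (drop k qA)"
        using qA(2) set_drop_subset[of k qA] unfolding secure_route_def by blast
      have "\<not> (Suc 0 < length (a # q0') \<and> cust ((a # q0') ! 1) v)"
      proof
        assume "Suc 0 < length (a # q0') \<and> cust ((a # q0') ! 1) v"
        then have cwv: "cust w v" using q0'' by simp
        have k0: "k \<noteq> 0" using k qA' cwv acyc by (metis nth_Cons_0 tranclp.r_into_trancl)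
        consider "w = d" | "\<exists>w2 rest. q0' = w # w2 # rest \<and> cust w2 w" | "cust v w"
          using exN by blast
        then show False
        proof cases
          case 1 then have "qA = [d]" using qA(1) rAd by simp
          then show False using True vd by simp
        next
          case 2
          then have "Suc 0 < length qA \<and> cust (qA ! 1) w" using qA(3) by auto
          then have "\<forall>j. 0 < j \<and> j < length qA \<longrightarrow> cust\<^sup>+\<^sup>+ (qA ! j) w"
            using L2[OF stA top _ qA(1)] nadj mqA by auto
          then have "cust\<^sup>+\<^sup>+ v w" using k k0 by auto
          then have "cust\<^sup>+\<^sup>+ v v" using cwv by (simp add: tranclp.trancl_into_trancl)
          then show False using acyc by blast
        next
          case 3
          then have "cust\<^sup>+\<^sup>+ v v" using cwv by (meson tranclp.r_into_trancl tranclp.trancl_into_trancl)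
          then show False using acyc by blast
        qed
      qed
      then show ?thesis using rv sd by blast
    next
      case False
      have exA: "exports cust d (Some m) w qA v"
        using exN
      proof (elim disjE)
        assume "\<exists>w2 rest. q0' = w # w2 # rest \<and> cust w2 w"
        then have "Suc 0 < length qA \<and> cust (qA ! 1) w" using qA(3) by auto
        then show ?thesis using qA' unfolding exports_def
          by (cases qA') auto
      qed (auto simp: exports_def)
      have oo: "v # qA \<in> offers cust peer d (Some m) rA v"
        unfolding offers_def using w(2) qA(1) False exA by blast
      have vA: "Some m \<noteq> Some v" using vm by auto
      have "offers cust peer d (Some m) rA v \<noteq> {}" using oo by auto
      then obtain pc where pc: "rA v = Some pc" "pc \<in> offers cust peer d (Some m) rA v"
        "rank1 cust peer S tb (Some m) v pc \<le> rank1 cust peer S tb (Some m) v (v # qA)"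
        using stA vd vA oo unfolding stable1_def by blast
      have so: "secure_route S (Some m) (v # qA)"
        using qA(2) vS vm unfolding secure_route_def by auto
      have sc: "sec_class S (Some m) v pc = 0"
        using pc(3) so unfolding rank1_def sec_class_def by (auto simp: less_eq_prod_def split: if_splits)
      have spc: "secure_route S (Some m) pc" using sc vS unfolding sec_class_def by (auto split: if_splits)
      obtain x rest where pcx: "pc = v # x # rest" using L0b[OF stA pc(1) vd] by blast
      have "Suc 0 < length (a # q0') \<and> cust ((a # q0') ! 1) v \<longrightarrow> cust (pc ! 1) v"
      proof
        assume "Suc 0 < length (a # q0') \<and> cust ((a # q0') ! 1) v"
        then have cwv: "cust w v" using q0'' by simp
        have "lp_class cust peer v (v # qA) = 0" using cwv qA' unfolding lp_class_def by simp
        then have "lp_class cust peer v pc = 0"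
          using pc(3) sc so unfolding rank1_def sec_class_def by (auto simp: less_eq_prod_def)
        then show "cust (pc ! 1) v" unfolding lp_class_def by (auto split: if_splits)
      qed
      then show ?thesis using pc(1) spc pcx by auto
    qed
  qed
qed

theorem theorem2:
  fixes cust peer :: "'a::finite \<Rightarrow> 'a \<Rightarrow> bool"
    and S :: "'a set" and tb :: "'a \<Rightarrow> 'a \<Rightarrow> nat"
    and m d s :: 'a and rN rA :: "'a \<Rightarrow> 'a list option" and p :: "'a list"
  assumes "as_topology cust peer"
    and "tiebreak_wf cust peer tb"
    and "m \<noteq> d" and "\<not> adj cust peer m d"
    and "stable1 cust peer S tb d None rN"
    and "stable1 cust peer S tb d (Some m) rA"
    and "rN s = Some p" and "secure_route S None p" and "m \<notin> set p"
  shows "\<exists>q. rA s = Some q \<and> secure_route S (Some m) q"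
  using main[OF assms(1,3,4,5,6) assms(7,8,9)] by blast

end
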